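(* For every positive integer $t$, $md_t \leq \left\lceil \frac{t+1}{2} \right\rceil$.
   Context: Let $t$ be a positive integer (the number of topics). A voter matrix with $t$ topics is a matrix $V\in\{Y,N\}^{n\times t}$ for some positive integer $n$ (the number of voters; rows are voters), subject to the standing assumption that in every column the number of entries $Y$ is at least the number of entries $N$ (so $Y$ is the majority opinion on every topic). $\mathcal{V}_t$ denotes the set of all voter matrices with $t$ topics and any number of voters. A proposal is a vector $p\in\{Y,N\}^t$. A voter (row) $v$ supports $p$ if the Hamming distance between $v$ and $p$ is at most $t/2$. A proposal $p$ is supported by $V$ if at least $n/2$ of the rows of $V$ support $p$. The number of majority decisions of a proposal is its number of entries $Y$. For $V$, $md_V$ is the maximum number $m$ such that there exists a proposal supported by $V$ with $m$ majority decisions, and $md_t=\min_{V\in\mathcal{V}_t} md_V$. *)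

theory Defs
  imports Complex_Main
begin

text \<open>Opinions: True = Y, False = N. A voter (row) and a proposal are bool lists
of length t. A voter matrix is a nonempty list of rows.\<close>

definition voter_matrix :: "nat \<Rightarrow> bool list list \<Rightarrow> bool" where
  "voter_matrix t V \<longleftrightarrow> V \<noteq> [] \<and> (\<forall>v\<in>set V. length v = t) \<and>
     (\<forall>j<t. card {i. i < length V \<and> \<not> (V ! i ! j)} \<le> card {i. i < length V \<and> V ! i ! j})"

definition hamming :: "nat \<Rightarrow> bool list \<Rightarrow> bool list \<Rightarrow> nat" where
  "hamming t v p = card {j. j < t \<and> v ! j \<noteq> p ! j}"

definition supports :: "nat \<Rightarrow> bool list \<Rightarrow> bool list \<Rightarrow> bool" where
  "supports t v p \<longleftrightarrow> 2 * hamming t v p \<le> t"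

definition supported :: "nat \<Rightarrow> bool list list \<Rightarrow> bool list \<Rightarrow> bool" where
  "supported t V p \<longleftrightarrow> length V \<le> 2 * card {i. i < length V \<and> supports t (V ! i) p}"

definition num_md :: "nat \<Rightarrow> bool list \<Rightarrow> nat" where
  "num_md t p = card {j. j < t \<and> p ! j}"

definition md_V :: "nat \<Rightarrow> bool list list \<Rightarrow> nat" where
  "md_V t V = Max {num_md t p | p. length p = t \<and> supported t V p}"

definition md :: "nat \<Rightarrow> nat" where
  "md t = Inf {md_V t V | V. voter_matrix t V}"

end

theory Submission
  imports Defs
begin

definition VV :: "nat \<Rightarrow> bool list list" where
  "VV t = map (\<lambda>i. map (\<lambda>j. if i < t then j = i else True) [0..<t]) [0..<2*t-2]"

lemma VV_len: "length (VV t) = 2*t-2" by (simp add: VV_def)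

lemma VV_nth: "i < 2*t-2 \<Longrightarrow> j < t \<Longrightarrow> VV t ! i ! j = (if i < t then j = i else True)"
  by (simp add: VV_def)

lemma VV_rowlen: "v \<in> set (VV t) \<Longrightarrow> length v = t" by (auto simp: VV_def)

lemma VV_vm: assumes "2 \<le> t" shows "voter_matrix t (VV t)"
proof -
  have "card {i. i < length (VV t) \<and> \<not> (VV t ! i ! j)} \<le> card {i. i < length (VV t) \<and> VV t ! i ! j}"
    if j: "j < t" for j
  proof -
    have e1: "{i. i < length (VV t) \<and> \<not> (VV t ! i ! j)} = {..<t} - {j}"
      using j assms by (auto simp: VV_len VV_nth split: if_splits)
    have e2: "{i. i < length (VV t) \<and> VV t ! i ! j} = insert j {t..<2*t-2}"
      using j assms by (auto simp: VV_len VV_nth)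
    show ?thesis unfolding e1 e2 using j assms by (simp add: card_insert_if)
  qed
  moreover have "VV t \<noteq> []" using assms by (simp add: VV_def)
  ultimately show ?thesis unfolding voter_matrix_def using VV_rowlen by blast
qed

lemma VV_bound:
  assumes "2 \<le> t" "length p = t" "supported t (VV t) p"
  shows "num_md t p \<le> (t+2) div 2"
proof (rule ccontr)
  assume "\<not> ?thesis"
  hence big: "t < 2 * (num_md t p - 1)" by simp
  have ns: "\<not> supports t (VV t ! i) p" if i: "i < t" for i
  proof -
    have "{j. j < t \<and> p ! j} - {i} \<subseteq> {j. j < t \<and> VV t ! i ! j \<noteq> p ! j}"
      using i assms(1) by (auto simp: VV_nth)
    hence "card ({j. j < t \<and> p ! j} - {i}) \<le> hamming t (VV t ! i) p"
      unfolding hamming_def by (intro card_mono) auto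
    moreover have "card {j. j < t \<and> p ! j} - card {i} \<le> card ({j. j < t \<and> p ! j} - {i})"
      by (rule diff_card_le_card_Diff) auto
    ultimately have "num_md t p - 1 \<le> hamming t (VV t ! i) p" unfolding num_md_def by simp
    thus ?thesis using big unfolding supports_def by simp
  qed
  have "{i. i < length (VV t) \<and> supports t (VV t ! i) p} \<subseteq> {t..<2*t-2}"
    using ns by (auto simp: VV_len) (meson not_less)
  hence "card {i. i < length (VV t) \<and> supports t (VV t ! i) p} \<le> t - 2"
    using card_mono[of "{t..<2*t-2}"] by fastforce
  thus False using assms(3) assms(1) unfolding supported_def VV_len by simp
qed

lemma md_le_mdV: assumes "voter_matrix t V" shows "md t \<le> md_V t V"
  unfolding md_def using assms by (intro cInf_lower) auto

lemma mdV_le: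
  assumes "length p0 = t" "supported t V p0"
    and "\<And>p. length p = t \<Longrightarrow> supported t V p \<Longrightarrow> num_md t p \<le> K"
  shows "md_V t V \<le> K"
proof -
  have fin: "finite {num_md t p | p. length p = t \<and> supported t V p}"
  proof (rule finite_subset)
    show "{num_md t p | p. length p = t \<and> supported t V p} \<subseteq> {..t}"
      unfolding num_md_def by (auto intro: order.trans[OF card_mono[of "{..<t}"]])
  qed auto
  show ?thesis unfolding md_V_def using fin assms by (subst Max_le_iff) auto
qed

lemma md_nat_bound: assumes "0 < t" shows "md t \<le> (t+2) div 2"
proof (cases "t = 1")
  case True
  have e: "{i. i < length [[True]] \<and> \<not> [[True]] ! i ! 0} = {}"
  proof (rule ccontr)
    assume "\<not> ?thesis" then obtain i where "i < 1" "\<not> [[True]] ! i ! 0" by auto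
    thus False by simp
  qed
  have c: "\<forall>j<1. card {i. i < length [[True]] \<and> \<not> [[True]] ! i ! j}
       \<le> card {i. i < length [[True]] \<and> [[True]] ! i ! j}"
  proof (intro allI impI)
    fix j :: nat assume "j < 1" hence j0: "j = 0" by simp
    show "card {i. i < length [[True]] \<and> \<not> [[True]] ! i ! j}
       \<le> card {i. i < length [[True]] \<and> [[True]] ! i ! j}"
      unfolding j0 e by (simp only: card.empty le0)
  qed
  have vm: "voter_matrix 1 [[True]]" unfolding voter_matrix_def using c by simp
  have h0: "{j::nat. j < 1 \<and> [[True]] ! 0 ! j \<noteq> [True] ! j} = {}"
  proof (rule ccontr)
    assume "\<not> ?thesis" then obtain j where "j < (1::nat)" "[[True]] ! 0 ! j \<noteq> [True] ! j" by auto
    thus False by simp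
  qed
  have s0: "supports 1 ([[True]] ! 0) [True]"
    unfolding supports_def hamming_def h0 by simp
  have "{i. i < length [[True]] \<and> supports 1 ([[True]] ! i) [True]} = {0}"
    using s0 by auto
  hence sp: "supported 1 [[True]] [True]"
    unfolding supported_def by simp
  have "md_V 1 [[True]] \<le> 1"
  proof (rule mdV_le[OF _ sp])
    fix p :: "bool list" assume "length p = 1"
    thus "num_md 1 p \<le> 1" unfolding num_md_def
      using card_mono[of "{..<1::nat}" "{j. j < 1 \<and> p ! j}"] by auto
  qed simp
  thus ?thesis using md_le_mdV[OF vm] True by simp
next
  case False
  hence t2: "2 \<le> t" using assms by simp
  have sp: "supported t (VV t) (replicate t False)"
  proof -
    have "supports t (VV t ! i) (replicate t False)" if "i < t" for i
    proof -
      have "{j. j < t \<and> VV t ! i ! j \<noteq> replicate t False ! j} = {i}"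
        using that t2 by (auto simp: VV_nth)
      thus ?thesis unfolding supports_def hamming_def using t2 by simp
    qed
    hence "{..<t} \<subseteq> {i. i < length (VV t) \<and> supports t (VV t ! i) (replicate t False)}"
      using t2 by (auto simp: VV_len)
    hence "t \<le> card {i. i < length (VV t) \<and> supports t (VV t ! i) (replicate t False)}"
      using card_mono[of "{i. i < length (VV t) \<and> supports t (VV t ! i) (replicate t False)}" "{..<t}"]
      by (simp add: VV_len)
    thus ?thesis unfolding supported_def VV_len by simp
  qed
  have "md_V t (VV t) \<le> (t+2) div 2"
    by (rule mdV_le[OF _ sp]) (use VV_bound t2 in auto)
  thus ?thesis using md_le_mdV[OF VV_vm[OF t2]] by simp
qed

theorem lemma4p2:
  fixes t :: nat
  assumes "0 < t"
  shows "real (md t) \<le> real_of_int \<lceil>(real t + 1) / 2\<rceil>"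
proof -
  have a: "md t \<le> (t+2) div 2" using md_nat_bound[OF assms] .
  have b: "int ((t+2) div 2) \<le> \<lceil>(real t + 1) / 2\<rceil>"
    unfolding le_ceiling_iff
  proof -
    have "real ((t+2) div 2) * 2 \<le> real t + 2" by linarith
    thus "real_of_int (int ((t+2) div 2)) - 1 < (real t + 1) / 2" by simp
  qed
  have "int (md t) \<le> \<lceil>(real t + 1) / 2\<rceil>" using a b by linarith
  thus ?thesis by (metis of_int_le_iff of_int_of_nat_eq)
qed

end
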